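(* Let $p\geq 3$ be a prime and $k$ a positive integer, and suppose that the sequence $\big(\nu_{p}(A_{p,k}(n))\big)_{n\in\mathbb{N}}$ is eventually constant and equal to $1$. Then: (a) if $p-1\mid k$, then $p\nmid k$; (b) if $p-1\nmid k$, $k=(p-1)k'+q$ for some integer $k'$ and some $q\in\{1,\ldots,p-2\}$, and $p\mid k'+1$, then $p^{2}\nmid k'+1$.
   Context: For an integer $m\geq 2$ and a positive integer $k$, the integers $A_{m,k}(n)$, $n\in\mathbb{N}=\{0,1,2,\ldots\}$, are defined by the formal power series identity $\prod_{i=0}^{\infty}\big(1-x^{m^{i}}\big)^{-k}=\sum_{n=0}^{\infty}A_{m,k}(n)x^{n}$. For a prime $p$, $\nu_p(n)$ denotes the $p$-adic valuation of the integer $n$, with $\nu_p(0)=+\infty$. *)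

theory Defs
  imports "HOL-Computational_Algebra.Computational_Algebra"
begin

definition geom_fps :: "nat \<Rightarrow> int fps" where
  "geom_fps d = Abs_fps (\<lambda>j. if d dvd j then 1 else 0)"

lemma geom_fps_inverse:
  assumes "d \<ge> 1"
  shows "(1 - fps_X ^ d) * geom_fps d = 1"
proof (rule fps_ext)
  fix n
  show "fps_nth ((1 - fps_X ^ d) * geom_fps d) n = fps_nth 1 n"
    using assms
    by (cases "n < d") (auto simp: algebra_simps geom_fps_def fps_mult_fps_X_power_nonzero(1)
          fps_X_power_mult_nth dvd_imp_le dvd_diff_nat le_imp_diff_is_add dest: dvd_imp_le)
qed

text \<open>A_{m,k}(n) = coefficient of x^n in prod_{i>=0} (1 - x^(m^i))^(-k).
  Factors with m^i > n (in particular all i > n, as m >= 2) do not affect the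
  coefficient of x^n, so the product over i <= n gives the same coefficient.\<close>
definition A :: "nat \<Rightarrow> nat \<Rightarrow> nat \<Rightarrow> int" where
  "A m k n = fps_nth ((\<Prod>i\<le>n. geom_fps (m ^ i)) ^ k) n"

end

theory Submission
  imports Defs
begin

definition good :: "nat \<Rightarrow> int fps \<Rightarrow> bool" where
  "good D g \<longleftrightarrow> g $ 0 = 1 \<and> (\<forall>j. 0 < j \<and> j < D \<longrightarrow> g $ j = 0)"

lemma good_mult_nth:
  assumes "good D g" "n < D"
  shows "(f * g) $ n = f $ n"
proof -
  have "(f * g) $ n = (\<Sum>i=0..n. f$i * g$(n - i))" by (rule fps_mult_nth)
  also have "\<dots> = (\<Sum>i\<in>{n}. f$i * g$(n - i))"
    using assms by (intro sum.mono_neutral_right) (auto simp: good_def)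
  also have "\<dots> = f $ n" using assms by (simp add: good_def)
  finally show ?thesis .
qed

lemma good_mult: "good D g \<Longrightarrow> good D h \<Longrightarrow> good D (g * h)"
  using good_mult_nth[where D=D and g=h and f=g] by (auto simp: good_def)

lemma good_power: "good D g \<Longrightarrow> good D (g ^ k)"
proof (induction k)
  case 0 then show ?case by (auto simp: good_def)
next
  case (Suc k) then show ?case using good_mult[of D g "g^k"] by simp
qed

lemma good_geom: "d \<ge> 1 \<Longrightarrow> good d (geom_fps d)"
  by (auto simp: good_def geom_fps_def dest: dvd_imp_le)

definition expand :: "nat \<Rightarrow> int fps \<Rightarrow> int fps" where
  "expand p f = Abs_fps (\<lambda>n. if p dvd n then f $ (n div p) else 0)"

lemma expand_nth: "expand p f $ n = (if p dvd n then f $ (n div p) else 0)"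
  by (simp add: expand_def)

lemma expand_mult:
  assumes p: "p > 0"
  shows "expand p (f * g) = expand p f * expand p g"
proof (rule fps_ext)
  fix n
  have "(expand p f * expand p g) $ n = (\<Sum>i=0..n. expand p f $ i * expand p g $ (n - i))"
    by (rule fps_mult_nth)
  also have "\<dots> = (\<Sum>i\<in>(\<lambda>j. p * j) ` {0..n div p}. expand p f $ i * expand p g $ (n - i))"
  proof (intro sum.mono_neutral_right)
    show "(\<lambda>j. p * j) ` {0..n div p} \<subseteq> {0..n}"
    proof
      fix i assume "i \<in> (\<lambda>j. p * j) ` {0..n div p}"
      then obtain j where j: "i = p * j" "j \<in> {0..n div p}" by (rule imageE)
      have "p * j \<le> p * (n div p)" using j(2) by simp
      also have "p * (n div p) \<le> n" by (metis div_mult_mod_eq le_add1 mult.commute)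
      finally show "i \<in> {0..n}" using j by simp
    qed
  next
    show "\<forall>i\<in>{0..n} - (\<lambda>j. p * j) ` {0..n div p}. expand p f $ i * expand p g $ (n - i) = 0"
    proof
      fix i assume i: "i \<in> {0..n} - (\<lambda>j. p * j) ` {0..n div p}"
      show "expand p f $ i * expand p g $ (n - i) = 0"
      proof (cases "p dvd i")
        case True
        then obtain j where "i = p * j" by auto
        with i have "j > n div p" by auto
        moreover have "(p * j) div p \<le> n div p" using i \<open>i = p*j\<close> by (intro div_le_mono) auto
        ultimately have False using p by simp
        then show ?thesis by simp
      qed (simp add: expand_nth)
    qed
  qed auto
  also have "\<dots> = (\<Sum>j=0..n div p. expand p f $ (p*j) * expand p g $ (n - p*j))"
    using p by (subst sum.reindex) (auto simp: inj_on_def)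
  also have "\<dots> = (expand p (f * g)) $ n"
  proof (cases "p dvd n")
    case True
    then obtain m where m: "n = p * m" by auto
    have "(\<Sum>j=0..n div p. expand p f $ (p*j) * expand p g $ (n - p*j)) = (\<Sum>j=0..m. f $ j * g $ (m - j))"
      using p m by (intro sum.cong) (auto simp: expand_nth simp flip: diff_mult_distrib2)
    then show ?thesis using p m by (simp add: expand_nth fps_mult_nth)
  next
    case False
    have "expand p g $ (n - p*j) = 0" if "j \<le> n div p" for j
    proof -
      have "\<not> p dvd (n - p*j)"
      proof
        assume "p dvd (n - p*j)"
        moreover have "p * j \<le> n"
        proof -
          have "p * j \<le> p * (n div p)" using that by simp
          also have "p * (n div p) \<le> n" by (metis div_mult_mod_eq le_add1 mult.commute)
          finally show ?thesis .
        qed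
        ultimately have "p dvd n" by (metis dvd_add dvd_triv_left le_add_diff_inverse2)
        with False show False by simp
      qed
      then show ?thesis by (simp add: expand_nth)
    qed
    then show ?thesis using False by (simp add: expand_nth)
  qed
  finally show "expand p (f * g) $ n = (expand p f * expand p g) $ n" ..
qed

lemma expand_one: "p > 0 \<Longrightarrow> expand p 1 = 1"
proof (rule fps_ext)
  fix n assume "p > 0"
  then show "expand p 1 $ n = 1 $ n"
    by (cases "n = 0") (auto simp: expand_nth elim!: dvdE)
qed

lemma expand_power: "p > 0 \<Longrightarrow> expand p (f ^ k) = (expand p f) ^ k"
  by (induction k) (simp_all add: expand_one expand_mult)

lemma expand_prod: "p > 0 \<Longrightarrow> expand p (\<Prod>i\<le>(M::nat). f i) = (\<Prod>i\<le>M. expand p (f i))"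
  by (induction M) (simp_all add: expand_mult)

lemma expand_geom:
  assumes "p > 0" shows "expand p (geom_fps d) = geom_fps (p * d)"
proof (rule fps_ext)
  fix n
  show "expand p (geom_fps d) $ n = geom_fps (p * d) $ n"
  proof (cases "p dvd n")
    case True
    then obtain m where m: "n = p * m" by (rule dvdE)
    have "(p * d dvd p * m) = (d dvd m)" using assms by simp
    then show ?thesis using m assms by (simp add: expand_nth geom_fps_def)
  next
    case False
    then have "\<not> p * d dvd n" using dvd_mult_left by blast
    then show ?thesis using False by (simp add: expand_nth geom_fps_def)
  qed
qed

definition PP :: "nat \<Rightarrow> nat \<Rightarrow> int fps" where
  "PP p M = (\<Prod>i\<le>M. geom_fps (p ^ i))"

lemma A_trunc:
  assumes p: "p \<ge> 2" and nM: "n \<le> M"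
  shows "(PP p M ^ k) $ n = A p k n"
  using nM
proof (induction M rule: dec_induct)
  case base
  then show ?case by (simp add: A_def PP_def)
next
  case (step M)
  have eq: "PP p (Suc M) ^ k = PP p M ^ k * geom_fps (p ^ Suc M) ^ k"
    by (simp add: PP_def power_mult_distrib)
  have pos: "p ^ Suc M \<ge> 1" using p by simp
  have g: "good (p ^ Suc M) (geom_fps (p ^ Suc M) ^ k)"
    by (rule good_power, rule good_geom, rule pos)
  have "Suc M < 2 ^ Suc M" by (rule less_exp)
  also have "(2::nat) ^ Suc M \<le> p ^ Suc M" using p by (intro power_mono) auto
  finally have "n < p ^ Suc M" using step by simp
  then have "(PP p (Suc M) ^ k) $ n = (PP p M ^ k) $ n"
    unfolding eq by (rule good_mult_nth[OF g])
  then show ?case using step by simp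
qed

lemma A_rec:
  assumes p: "p \<ge> 2"
  shows "(\<Sum>i=0..n. ((1 - fps_X) ^ k :: int fps) $ i * A p k (n - i))
         = (if p dvd n then A p k (n div p) else 0)"
proof -
  have p0: "p > 0" using p by simp
  have P: "PP p (Suc n) = geom_fps 1 * expand p (PP p n)"
    unfolding PP_def prod.atMost_Suc_shift expand_prod[OF p0]
    by (simp add: expand_geom[OF p0])
  have g1: "(1 - fps_X) * geom_fps 1 = (1 :: int fps)"
    using geom_fps_inverse[of 1] by simp
  have key: "(1 - fps_X) ^ k * PP p (Suc n) ^ k = expand p (PP p n ^ k)"
  proof -
    have "(1 - fps_X) ^ k * PP p (Suc n) ^ k = ((1 - fps_X) * geom_fps 1) ^ k * expand p (PP p n) ^ k"
      unfolding P by (simp add: power_mult_distrib mult_ac)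
    also have "\<dots> = expand p (PP p n ^ k)" using g1 by (simp add: expand_power[OF p0])
    finally show ?thesis .
  qed
  have "((1 - fps_X) ^ k * PP p (Suc n) ^ k) $ n
        = (\<Sum>i=0..n. ((1 - fps_X) ^ k :: int fps) $ i * A p k (n - i))"
    unfolding fps_mult_nth by (intro sum.cong refl) (simp add: A_trunc[OF p])
  moreover have "(expand p (PP p n ^ k)) $ n = (if p dvd n then A p k (n div p) else 0)"
    by (simp add: expand_nth A_trunc[OF p])
  ultimately show ?thesis using key by simp
qed

lemma oneX_mult_nth:
  "((1 - fps_X) * (f :: int fps)) $ n = f $ n - (if n = 0 then 0 else f $ (n - 1))"
  by (simp add: left_diff_distrib)

lemma oneX_pow_above: "n > k \<Longrightarrow> ((1 - fps_X) ^ k :: int fps) $ n = 0"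
proof (induction k arbitrary: n)
  case 0 then show ?case by simp
next
  case (Suc k)
  have "((1 - fps_X) ^ Suc k :: int fps) $ n = ((1 - fps_X) ^ k :: int fps) $ n - ((1 - fps_X) ^ k :: int fps) $ (n - 1)"
    using Suc.prems by (simp only: power_Suc oneX_mult_nth) simp
  then show ?case using Suc by simp
qed

lemma oneX_pow_top: "((1 - fps_X) ^ k :: int fps) $ k = (-1) ^ k"
proof (induction k)
  case 0 then show ?case by simp
next
  case (Suc k)
  have "((1 - fps_X) ^ Suc k :: int fps) $ Suc k = ((1 - fps_X) ^ k :: int fps) $ Suc k - ((1 - fps_X) ^ k :: int fps) $ k"
    by (simp only: power_Suc oneX_mult_nth) simp
  then show ?case using Suc oneX_pow_above[of k "Suc k"] by simp
qed

lemma oneX_pow_0: "((1 - fps_X) ^ k :: int fps) $ 0 = 1"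
  by (induction k) (simp_all add: oneX_mult_nth)

lemma frobenius_dvd:
  fixes x y :: "'a :: comm_ring_1"
  assumes "prime p"
  shows "of_nat p dvd ((x + y) ^ p - x ^ p - y ^ p)"
proof -
  have "p \<ge> 2" using prime_ge_2_nat[OF assms] .
  then obtain q where q: "p = Suc (Suc q)" by (cases p; cases "p - 1") auto
  define T where "T k = of_nat (p choose k) * x ^ k * y ^ (p - k)" for k
  have "(x + y) ^ p = (\<Sum>k\<le>p. T k)" unfolding T_def by (rule binomial_ring)
  also have "\<dots> = T 0 + (\<Sum>i\<le>Suc q. T (Suc i))" unfolding q by (rule sum.atMost_Suc_shift)
  also have "\<dots> = T 0 + (\<Sum>i\<le>q. T (Suc i)) + T p" by (simp add: q)
  finally have eq: "(x + y) ^ p - x ^ p - y ^ p = (\<Sum>i\<le>q. T (Suc i))"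
    by (simp add: T_def q)
  have "of_nat p dvd T (Suc i)" if "i \<le> q" for i
  proof -
    have "p dvd (p choose Suc i)"
      by (rule dvd_choose_prime) (use that q assms in auto)
    then obtain m where "p choose Suc i = p * m" by (rule dvdE)
    then show ?thesis by (simp add: T_def)
  qed
  then have "of_nat p dvd (\<Sum>i\<le>q. T (Suc i))" by (intro dvd_sum) auto
  then show ?thesis using eq by simp
qed

lemma sq_dvd:
  fixes a r :: "'a :: comm_ring_1"
  assumes "prime p"
  shows "(of_nat p) ^ 2 dvd ((a + of_nat p * r) ^ p - a ^ p)"
proof -
  define c :: 'a where "c = of_nat p"
  have "p \<ge> 2" using prime_ge_2_nat[OF assms] .
  then obtain q where q: "p = Suc q" by (cases p) auto
  define T where "T k = of_nat (p choose k) * (c * r) ^ k * a ^ (p - k)" for k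
  have "(c * r + a) ^ p = (\<Sum>k\<le>p. T k)" unfolding T_def by (rule binomial_ring)
  also have "\<dots> = T 0 + (\<Sum>i\<le>q. T (Suc i))" unfolding q by (rule sum.atMost_Suc_shift)
  finally have eq: "(a + c * r) ^ p - a ^ p = (\<Sum>i\<le>q. T (Suc i))"
    by (simp add: T_def add.commute)
  have "c ^ 2 dvd T (Suc i)" for i
  proof (cases i)
    case 0
    have "T (Suc i) = c * c * (r * a ^ (p - 1))" using 0 by (simp add: T_def c_def)
    then show ?thesis by (simp add: power2_eq_square)
  next
    case (Suc j)
    have "c ^ 2 dvd c ^ Suc i" using Suc by (intro le_imp_power_dvd) auto
    then have h: "c ^ 2 dvd (c * r) ^ Suc i" unfolding power_mult_distrib by (rule dvd_mult2)
    show ?thesis unfolding T_def by (rule dvd_mult2, rule dvd_mult, rule h)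
  qed
  then have "c ^ 2 dvd (\<Sum>i\<le>q. T (Suc i))" by (intro dvd_sum) auto
  then show ?thesis using eq by (simp add: c_def)
qed

lemma main_cong:
  fixes x :: "'a :: comm_ring_1"
  assumes "prime p" "odd p" "p dvd d"
  shows "(of_nat p) ^ 2 dvd ((1 - x) ^ (p * d) - (1 - x ^ p) ^ d)"
proof -
  define c :: 'a where "c = of_nat p"
  obtain e where e: "d = p * e" using assms(3) by (rule dvdE)
  define a where "a = 1 - x ^ p"
  define u where "u = (1 - x) ^ p"
  have "c dvd ((1 + (- x)) ^ p - 1 ^ p - (- x) ^ p)"
    unfolding c_def by (rule frobenius_dvd[OF assms(1)])
  then have "c dvd (u - a)" using assms(2) by (simp add: u_def a_def algebra_simps)
  then obtain r where "u - a = c * r" by (rule dvdE)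
  then have u: "u = a + c * r" by (simp add: algebra_simps)
  have "c ^ 2 dvd (u ^ p - a ^ p)" unfolding u c_def by (rule sq_dvd[OF assms(1)])
  moreover have "(u ^ p - a ^ p) dvd ((u ^ p) ^ e - (a ^ p) ^ e)"
    using power_diff_sumr2[of "u ^ p" e "a ^ p"] by simp
  ultimately have "c ^ 2 dvd ((u ^ p) ^ e - (a ^ p) ^ e)" by (rule dvd_trans)
  moreover have "(u ^ p) ^ e = (1 - x) ^ (p * d)"
    by (simp add: u_def e flip: power_mult) (simp add: mult_ac)
  moreover have "(a ^ p) ^ e = (1 - x ^ p) ^ d"
    by (simp add: a_def e flip: power_mult)
  ultimately show ?thesis by (simp add: c_def)
qed

lemma fps_const_dvd_nth:
  assumes "(of_nat m :: int fps) dvd f"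
  shows "int m dvd f $ n"
proof -
  obtain h where "f = of_nat m * h" using assms by (rule dvdE)
  then have "f = fps_const (int m) * h" by (simp add: fps_of_nat)
  then show ?thesis by simp
qed

lemma uniq:
  fixes W B :: "nat \<Rightarrow> int"
  assumes B0: "B 0 = 1" and p: "p \<ge> 2" and W0: "m dvd W 0"
    and rec: "\<And>n. m dvd ((\<Sum>i=0..n. B i * W (n - i)) - (if p dvd n then W (n div p) else 0))"
  shows "m dvd W n"
proof (induction n rule: less_induct)
  case (less n)
  show ?case
  proof (cases "n = 0")
    case True then show ?thesis using W0 by simp
  next
    case False
    have split: "(\<Sum>i=0..n. B i * W (n - i)) = B 0 * W n + (\<Sum>i=Suc 0..n. B i * W (n - i))"
      by (subst sum.atLeast_Suc_atMost) auto
    have r: "m dvd (\<Sum>i=Suc 0..n. B i * W (n - i))"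
      using False by (intro dvd_sum dvd_mult less.IH) auto
    have e: "m dvd (if p dvd n then W (n div p) else 0)"
      using False p by (auto intro!: less.IH)
    have "W n = ((\<Sum>i=0..n. B i * W (n - i)) - (if p dvd n then W (n div p) else 0))
                 - (\<Sum>i=Suc 0..n. B i * W (n - i)) + (if p dvd n then W (n div p) else 0)"
      using split B0 by simp
    then show ?thesis using rec[of n] r e by (metis dvd_add dvd_diff)
  qed
qed

lemma expand_1X:
  assumes p: "p \<ge> 2"
  shows "expand p (1 - fps_X) = (1 - fps_X ^ p :: int fps)"
proof (rule fps_ext)
  fix n
  show "expand p (1 - fps_X) $ n = (1 - fps_X ^ p :: int fps) $ n"
  proof (cases "p dvd n")
    case True
    then obtain m where m: "n = p * m" by (rule dvdE)
    have "m = 0 \<or> m = 1 \<or> m \<ge> 2" by auto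
    then show ?thesis using p m by (auto simp: expand_nth fps_X_nth)
  next
    case False
    have n0: "n > 0" using False by (metis dvd_0_right neq0_conv)
    have np: "n \<noteq> p" using False by auto
    show ?thesis using False n0 np by (simp add: expand_nth)
  qed
qed

lemma A_0: "p \<ge> 2 \<Longrightarrow> A p k 0 = 1"
proof -
  assume p: "p \<ge> 2"
  have "good 1 (geom_fps 1 ^ k)" by (intro good_power good_geom) simp
  then show ?thesis by (simp add: A_def good_def)
qed

theorem corollary3p4:
  fixes p k :: nat
  assumes "prime p" and "p \<ge> 3" and "k \<ge> 1"
    and "\<exists>N. \<forall>n\<ge>N. A p k n \<noteq> 0 \<and> multiplicity (int p) (A p k n) = 1"
  shows "((p - 1) dvd k \<longrightarrow> \<not> p dvd k)
       \<and> (\<forall>k' q :: nat. \<not> (p - 1) dvd k \<and> k = (p - 1) * k' + q \<and> 1 \<le> q \<and> q \<le> p - 2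
            \<and> p dvd (k' + 1) \<longrightarrow> \<not> p ^ 2 dvd (k' + 1))"
proof -
  have pr: "prime p" and p3: "p \<ge> 3" using assms by auto
  have p2: "p \<ge> 2" using p3 by simp
  have pri: "prime (int p)" using pr by simp
  have nu: "\<not> is_unit (int p)" using pri not_prime_unit by blast
  obtain N where N: "\<And>n. n \<ge> N \<Longrightarrow> A p k n \<noteq> 0 \<and> multiplicity (int p) (A p k n) = 1"
    using assms(4) by blast
  have hdvd: "int p dvd A p k n" if "n \<ge> N" for n
  proof -
    have "int p ^ multiplicity (int p) (A p k n) dvd A p k n" by (rule multiplicity_dvd)
    then show ?thesis using N[OF that] by simp
  qed
  have nsq: "\<not> (int p) ^ 2 dvd A p k n" if "n \<ge> N" for n
  proof
    assume "(int p) ^ 2 dvd A p k n"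
    then have "2 \<le> multiplicity (int p) (A p k n)"
      using N[OF that] nu by (intro multiplicity_geI) auto
    then show False using N[OF that] by simp
  qed
  define B where "B = ((1 - fps_X) ^ k :: int fps)"
  have rec: "\<And>n. (\<Sum>i=0..n. B $ i * A p k (n - i)) = (if p dvd n then A p k (n div p) else 0)"
    unfolding B_def by (rule A_rec[OF p2])
  have Babove: "\<And>i. i > k \<Longrightarrow> B $ i = 0" unfolding B_def by (rule oneX_pow_above)
  have Bk: "\<not> int p dvd B $ k"
  proof
    assume "int p dvd B $ k"
    then have "int p dvd (-1) ^ k" by (simp add: B_def oneX_pow_top)
    then have "int p dvd 1" by (cases "even k") (simp_all add: minus_one_power_iff)
    then show False using nu by simp
  qed
  define S where "S = {n. \<not> int p dvd A p k n}"
  have S0: "0 \<in> S" using A_0[OF p2] nu by (simp add: S_def)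
  have Sfin: "finite S"
  proof (rule finite_subset)
    show "S \<subseteq> {..<N}"
    proof
      fix x assume "x \<in> S"
      then have "\<not> int p dvd A p k x" by (simp add: S_def)
      then have "\<not> x \<ge> N" using hdvd by blast
      then show "x \<in> {..<N}" by simp
    qed
  qed simp
  define d where "d = Max S"
  have dS: "d \<in> S" unfolding d_def using Sfin S0 by (intro Max_in) auto
  have dmax: "\<And>n. n \<in> S \<Longrightarrow> n \<le> d" unfolding d_def using Sfin by simp
  have above_d: "\<And>n. n > d \<Longrightarrow> int p dvd A p k n"
    using dmax by (force simp: S_def)
  have ineq1: "d + k \<le> p * d"
  proof -
    have split: "(\<Sum>i=0..d+k. B $ i * A p k (d + k - i))
        = B $ k * A p k d + (\<Sum>i\<in>{0..d+k} - {k}. B $ i * A p k (d + k - i))"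
      by (subst sum.remove[of _ k]) auto
    have rest: "int p dvd (\<Sum>i\<in>{0..d+k} - {k}. B $ i * A p k (d + k - i))"
    proof (intro dvd_sum)
      fix i assume i: "i \<in> {0..d+k} - {k}"
      show "int p dvd B $ i * A p k (d + k - i)"
      proof (cases "i < k")
        case True then show ?thesis using above_d[of "d + k - i"] by simp
      next
        case False then show ?thesis using i Babove[of i] by simp
      qed
    qed
    have "\<not> int p dvd B $ k * A p k d" using Bk dS pri by (simp add: S_def prime_dvd_mult_iff)
    then have "\<not> int p dvd (\<Sum>i=0..d+k. B $ i * A p k (d + k - i))"
    proof (rule contrapos_nn)
      assume h: "int p dvd (\<Sum>i=0..d+k. B $ i * A p k (d + k - i))"
      have "int p dvd (\<Sum>i=0..d+k. B $ i * A p k (d + k - i)) - (\<Sum>i\<in>{0..d+k} - {k}. B $ i * A p k (d + k - i))"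
        using h rest by (rule dvd_diff)
      then show "int p dvd B $ k * A p k d" unfolding split by simp
    qed
    then have "\<not> int p dvd (if p dvd (d + k) then A p k ((d + k) div p) else 0)"
      using rec[of "d + k"] by simp
    then have pd: "p dvd (d + k)" and "(d + k) div p \<in> S"
      by (simp_all add: S_def split: if_splits)
    then have "(d + k) div p \<le> d" using dmax by simp
    then have "p * ((d + k) div p) \<le> p * d" by simp
    then show ?thesis using pd by simp
  qed
  have ineq2: "p * d \<le> d + k"
  proof -
    have "\<not> int p dvd (\<Sum>i=0..p*d. B $ i * A p k (p * d - i))"
      using rec[of "p * d"] dS p2 by (simp add: S_def)
    then obtain i where i: "i \<in> {0..p*d}" and ni: "\<not> int p dvd B $ i * A p k (p * d - i)"
      using dvd_sum[of "{0..p*d}" "int p" "\<lambda>i. B $ i * A p k (p * d - i)"] by blast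
    have "B $ i \<noteq> 0" using ni by auto
    then have "i \<le> k" using Babove[of i] by (cases "i \<le> k") auto
    moreover have "\<not> int p dvd A p k (p * d - i)" using ni dvd_mult by blast
    then have "p * d - i \<le> d" using dmax[of "p * d - i"] by (simp add: S_def)
    ultimately show ?thesis using i by simp
  qed
  have kd: "k = (p - 1) * d"
    using ineq1 ineq2 by (simp add: diff_mult_distrib)
  have partb: "(p - 1) dvd k" using kd by simp
  have parta: "\<not> p dvd k"
  proof
    assume pk: "p dvd k"
    have "\<not> p dvd (p - 1)"
    proof
      assume "p dvd (p - 1)"
      then have "p \<le> p - 1" using p2 by (intro dvd_imp_le) auto
      then show False using p2 by simp
    qed
    then have pdd: "p dvd d" using pk kd pr by (simp add: prime_dvd_mult_iff)
    have oddp: "odd p" using pr p3 by (intro prime_odd_nat) auto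
    define C where "C = ((1 - fps_X) ^ d :: int fps)"
    define W where "W n = A p k n - C $ n" for n
    have W0: "int (p ^ 2) dvd W 0" using A_0[OF p2] by (simp add: W_def C_def oneX_pow_0)
    have Crec: "(\<Sum>i=0..n. B $ i * C $ (n - i)) = ((1 - fps_X) ^ (p * d) :: int fps) $ n" for n
    proof -
      have "k + d = p * d" using kd p2 by (cases p) auto
      then have "B * C = (1 - fps_X) ^ (p * d)" by (simp add: B_def C_def flip: power_add)
      then show ?thesis by (metis fps_mult_nth)
    qed
    have Cexp: "(if p dvd n then C $ (n div p) else 0) = ((1 - fps_X ^ p) ^ d :: int fps) $ n" for n
    proof -
      have "expand p C = (1 - fps_X ^ p) ^ d"
        using p2 by (simp add: C_def expand_power expand_1X)
      then show ?thesis by (metis expand_nth)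
    qed
    have Wrec: "int (p ^ 2) dvd ((\<Sum>i=0..n. B $ i * W (n - i)) - (if p dvd n then W (n div p) else 0))" for n
    proof -
      have "(\<Sum>i=0..n. B $ i * W (n - i)) = (\<Sum>i=0..n. B $ i * A p k (n - i)) - (\<Sum>i=0..n. B $ i * C $ (n - i))"
        by (simp add: W_def right_diff_distrib sum_subtractf)
      moreover have "(if p dvd n then W (n div p) else 0) = (if p dvd n then A p k (n div p) else 0) - (if p dvd n then C $ (n div p) else 0)"
        by (simp add: W_def)
      ultimately have "(\<Sum>i=0..n. B $ i * W (n - i)) - (if p dvd n then W (n div p) else 0)
          = - (((1 - fps_X) ^ (p * d) - (1 - fps_X ^ p) ^ d :: int fps) $ n)"
        using rec[of n] Crec[of n] Cexp[of n] by simp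
      moreover have "int (p ^ 2) dvd (((1 - fps_X) ^ (p * d) - (1 - fps_X ^ p) ^ d :: int fps) $ n)"
        by (rule fps_const_dvd_nth) (use main_cong[OF pr oddp pdd, where x = "fps_X :: int fps"] in simp)
      ultimately show ?thesis by (metis dvd_minus_iff minus_diff_eq)
    qed
    have B0: "B $ 0 = 1" by (simp add: B_def oneX_pow_0)
    have allW: "int (p ^ 2) dvd W n" for n
      by (rule uniq[where B = "\<lambda>i. B $ i" and p = p, OF B0 p2 W0 Wrec])
    define n where "n = max N (Suc d)"
    have "C $ n = 0" unfolding C_def by (rule oneX_pow_above) (simp add: n_def)
    then have "int p ^ 2 dvd A p k n" using allW[of n] by (simp add: W_def)
    then show False using nsq[of n] by (simp add: n_def)
  qed
  show ?thesis using parta partb by blast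
qed

end
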